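(* Let $G$ be an l.c.s.c. group with left Haar measure $m_G$, $A$ a Polish $G$-module, $p\geq 1$, and $f:G^{p+1}\to A$ almost type-I. Then for $m_G$-almost every $h\in G$ the slice $f_h:G^p\to A$, $f_h(g_1,\dots,g_p):=f(g_1,\dots,g_p,h)$, is almost type-I. If $G$ is an algebraic subgroup of $\mathrm{GL}_n(\mathbb{R})$ and $f$ is almost type-II, then $f_h$ is almost type-II for a.e. $h$. If moreover $f$ is $G$-equivariant, i.e. $f(kg_1,\dots,kg_{p+1})=k\cdot f(g_1,\dots,g_{p+1})$ for all $k,g_i\in G$, then these conclusions hold for every $h\in G$; and if $f$ is also regular at the identity then $f_h$ is regular at $(h,\dots,h)\in G^p$.
   Context: For $X=G^q$ with Haar measure and $A$ a Polish Abelian group: $f:X\to A$ is of type I if it is locally finite-valued and locally constant on some open set of full measure; almost type-I if a locally uniform limit (uniform on compacts) of type-I functions. For algebraic $G\le\mathrm{GL}_n(\mathbb{R})$, type II means locally finite-valued with level sets agreeing locally with semi-algebraic subsets of $G^q$; almost type-II means a locally uniform limit of type-II functions. An almost type-I (resp. II) function is regular at $x_0$ if it is a locally uniform limit of type-I (resp. II) functions each locally constant on a neighbourhood of $x_0$. *)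

theory Defs
  imports "HOL-Analysis.Analysis" "HOL-Probability.Probability"
begin

section \<open>Locally compact second countable groups (carrier-based)\<close>

definition lcsc_group :: "'g::topological_space set \<Rightarrow> ('g \<Rightarrow> 'g \<Rightarrow> 'g) \<Rightarrow> ('g \<Rightarrow> 'g) \<Rightarrow> 'g \<Rightarrow> bool" where
  "lcsc_group G mul iv e \<longleftrightarrow>
     e \<in> G \<and> (\<forall>x\<in>G. \<forall>y\<in>G. mul x y \<in> G) \<and> (\<forall>x\<in>G. iv x \<in> G) \<and>
     (\<forall>x\<in>G. \<forall>y\<in>G. \<forall>z\<in>G. mul (mul x y) z = mul x (mul y z)) \<and>
     (\<forall>x\<in>G. mul e x = x \<and> mul x e = x) \<and>
     (\<forall>x\<in>G. mul (iv x) x = e \<and> mul x (iv x) = e) \<and>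
     continuous_on (G \<times> G) (\<lambda>(x, y). mul x y) \<and> continuous_on G iv \<and>
     Hausdorff_space (top_of_set G) \<and> locally_compact_space (top_of_set G) \<and>
     second_countable (top_of_set G)"

text \<open>A left Haar measure on the Borel sets of G: left invariant, finite on compact sets,
  positive on nonempty open sets.\<close>
definition left_haar :: "'g::topological_space set \<Rightarrow> ('g \<Rightarrow> 'g \<Rightarrow> 'g) \<Rightarrow> 'g measure \<Rightarrow> bool" where
  "left_haar G mul M \<longleftrightarrow>
     space M = G \<and> sets M = sets (restrict_space borel G) \<and>
     (\<forall>g\<in>G. \<forall>S\<in>sets M. emeasure M ((mul g) ` S) = emeasure M S) \<and>
     (\<forall>K. compact K \<and> K \<subseteq> G \<longrightarrow> emeasure M K < \<infinity>) \<and>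
     (\<forall>U. openin (top_of_set G) U \<and> U \<noteq> {} \<longrightarrow> emeasure M U > 0)"

text \<open>Polish G-module: A is a Polish abelian topological group (type class), with a
  continuous action of G by group automorphisms.\<close>
definition polish_G_module :: "'g::topological_space set \<Rightarrow> ('g \<Rightarrow> 'g \<Rightarrow> 'g) \<Rightarrow> 'g \<Rightarrow>
     ('g \<Rightarrow> 'a::{polish_space, topological_ab_group_add} \<Rightarrow> 'a) \<Rightarrow> bool" where
  "polish_G_module G mul e act \<longleftrightarrow>
     (\<forall>a. act e a = a) \<and>
     (\<forall>g\<in>G. \<forall>h\<in>G. \<forall>a. act (mul g h) a = act g (act h a)) \<and>
     (\<forall>g\<in>G. \<forall>a b. act g (a + b) = act g a + act g b) \<and>
     continuous_on (G \<times> UNIV) (\<lambda>(g, a). act g a)"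

section \<open>Powers G^q\<close>

text \<open>G^p is represented inside the type 'g^'n (p = CARD('n)); G^(p+1) as G^p \<times> G.\<close>
definition gpow :: "'g set \<Rightarrow> ('g ^ 'n::finite) set" where
  "gpow G = {x. \<forall>i. x $ i \<in> G}"

definition vec_measure :: "'g measure \<Rightarrow> ('g ^ 'n::finite) measure" where
  "vec_measure M = embed_measure (PiM UNIV (\<lambda>_::'n. M)) vec_lambda"

section \<open>Type I / type II functions\<close>

definition locally_finite_valued :: "'x::topological_space set \<Rightarrow> ('x \<Rightarrow> 'a) \<Rightarrow> bool" where
  "locally_finite_valued X f \<longleftrightarrow>
     (\<forall>x\<in>X. \<exists>U. openin (top_of_set X) U \<and> x \<in> U \<and> finite (f ` U))"

definition locally_constant_on :: "'x::topological_space set \<Rightarrow> 'x set \<Rightarrow> ('x \<Rightarrow> 'a) \<Rightarrow> bool" where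
  "locally_constant_on X U f \<longleftrightarrow>
     (\<forall>x\<in>U. \<exists>V. openin (top_of_set X) V \<and> x \<in> V \<and> V \<subseteq> U \<and> (\<forall>y\<in>V. f y = f x))"

definition typeI :: "'x::topological_space set \<Rightarrow> 'x measure \<Rightarrow> ('x \<Rightarrow> 'a) \<Rightarrow> bool" where
  "typeI X \<mu> f \<longleftrightarrow> locally_finite_valued X f \<and>
     (\<exists>U. openin (top_of_set X) U \<and> X - U \<in> null_sets \<mu> \<and> locally_constant_on X U f)"

text \<open>Uniform convergence on K with respect to the (canonical) group uniformity of A.\<close>
definition unif_conv_on :: "'x set \<Rightarrow> (nat \<Rightarrow> 'x \<Rightarrow> 'a::topological_ab_group_add) \<Rightarrow> ('x \<Rightarrow> 'a) \<Rightarrow> bool" where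
  "unif_conv_on K F f \<longleftrightarrow>
     (\<forall>V. open V \<and> 0 \<in> V \<longrightarrow> (\<forall>\<^sub>F n in sequentially. \<forall>x\<in>K. F n x - f x \<in> V))"

definition locally_uniform_limit :: "'x::topological_space set \<Rightarrow> (nat \<Rightarrow> 'x \<Rightarrow> 'a::topological_ab_group_add) \<Rightarrow> ('x \<Rightarrow> 'a) \<Rightarrow> bool" where
  "locally_uniform_limit X F f \<longleftrightarrow> (\<forall>K. compact K \<and> K \<subseteq> X \<longrightarrow> unif_conv_on K F f)"

definition almost_typeI :: "'x::topological_space set \<Rightarrow> 'x measure \<Rightarrow> ('x \<Rightarrow> 'a::topological_ab_group_add) \<Rightarrow> bool" where
  "almost_typeI X \<mu> f \<longleftrightarrow> (\<exists>F. (\<forall>n. typeI X \<mu> (F n)) \<and> locally_uniform_limit X F f)"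

definition regular_typeI :: "'x::topological_space set \<Rightarrow> 'x measure \<Rightarrow> ('x \<Rightarrow> 'a::topological_ab_group_add) \<Rightarrow> 'x \<Rightarrow> bool" where
  "regular_typeI X \<mu> f x0 \<longleftrightarrow> almost_typeI X \<mu> f \<and>
     (\<exists>F. (\<forall>n. typeI X \<mu> (F n) \<and>
              (\<exists>V. openin (top_of_set X) V \<and> x0 \<in> V \<and> (\<forall>y\<in>V. F n y = F n x0)))
          \<and> locally_uniform_limit X F f)"

text \<open>Semi-algebraic sets: finite Boolean combinations of sets {p = 0} and {p > 0},
  p a real polynomial function (in the real coordinates).\<close>
inductive_set semialgebraic :: "('x::real_normed_vector) set set" where
  zero: "real_polynomial_function p \<Longrightarrow> {x. p x = 0} \<in> semialgebraic"
| pos: "real_polynomial_function p \<Longrightarrow> {x. p x > 0} \<in> semialgebraic"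
| compl: "S \<in> semialgebraic \<Longrightarrow> - S \<in> semialgebraic"
| union: "S \<in> semialgebraic \<Longrightarrow> T \<in> semialgebraic \<Longrightarrow> S \<union> T \<in> semialgebraic"

definition typeII :: "'x::real_normed_vector set \<Rightarrow> ('x \<Rightarrow> 'a) \<Rightarrow> bool" where
  "typeII X f \<longleftrightarrow> locally_finite_valued X f \<and>
     (\<forall>x\<in>X. \<exists>U. openin (top_of_set X) U \<and> x \<in> U \<and>
        (\<forall>a. \<exists>S\<in>semialgebraic. {y\<in>U. f y = a} = S \<inter> U))"

definition almost_typeII :: "'x::real_normed_vector set \<Rightarrow> ('x \<Rightarrow> 'a::topological_ab_group_add) \<Rightarrow> bool" where
  "almost_typeII X f \<longleftrightarrow> (\<exists>F. (\<forall>n. typeII X (F n)) \<and> locally_uniform_limit X F f)"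

definition regular_typeII :: "'x::real_normed_vector set \<Rightarrow> ('x \<Rightarrow> 'a::topological_ab_group_add) \<Rightarrow> 'x \<Rightarrow> bool" where
  "regular_typeII X f x0 \<longleftrightarrow> almost_typeII X f \<and>
     (\<exists>F. (\<forall>n. typeII X (F n) \<and>
              (\<exists>V. openin (top_of_set X) V \<and> x0 \<in> V \<and> (\<forall>y\<in>V. F n y = F n x0)))
          \<and> locally_uniform_limit X F f)"

section \<open>Algebraic subgroups of GL_n(R)\<close>

definition algebraic_subgroup :: "(real ^ 'k ^ 'k) set \<Rightarrow> bool" where
  "algebraic_subgroup G \<longleftrightarrow>
     (\<exists>P. (\<forall>p\<in>P. real_polynomial_function p) \<and>
          G = {A. invertible A \<and> (\<forall>p\<in>P. p A = 0)}) \<and>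
     mat 1 \<in> G \<and> (\<forall>A\<in>G. \<forall>B\<in>G. A ** B \<in> G) \<and> (\<forall>A\<in>G. matrix_inv A \<in> G)"

definition equivariant :: "'g set \<Rightarrow> ('g \<Rightarrow> 'g \<Rightarrow> 'g) \<Rightarrow> ('g \<Rightarrow> 'a \<Rightarrow> 'a) \<Rightarrow>
     (('g ^ 'n::finite) \<times> 'g \<Rightarrow> 'a) \<Rightarrow> bool" where
  "equivariant G mul act f \<longleftrightarrow>
     (\<forall>k\<in>G. \<forall>x\<in>gpow G. \<forall>h\<in>G. f (\<chi> i. mul k (x $ i), mul k h) = act k (f (x, h)))"

end

theory Submission
  imports Defs
begin

(* ---- part A ---- *)


lemma cont_pair_left: "continuous_on A (\<lambda>x. (x, h))"
  by (intro continuous_intros)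

lemma slice_open:
  assumes "openin (top_of_set (A \<times> B)) U" "h \<in> B"
  shows "openin (top_of_set A) {x\<in>A. (x, h) \<in> U}"
proof -
  have "openin (top_of_set A) (A \<inter> (\<lambda>x. (x, h)) -` U)"
    by (rule continuous_openin_preimage[OF cont_pair_left _ assms(1)]) (use assms in auto)
  moreover have "A \<inter> (\<lambda>x. (x, h)) -` U = {x\<in>A. (x, h) \<in> U}" by auto
  ultimately show ?thesis by simp
qed

lemma slice_lfv:
  assumes "locally_finite_valued (A \<times> B) f" "h \<in> B"
  shows "locally_finite_valued A (\<lambda>x. f (x, h))"
  unfolding locally_finite_valued_def
proof
  fix x assume x: "x \<in> A"
  then obtain U where U: "openin (top_of_set (A \<times> B)) U" "(x,h) \<in> U" "finite (f ` U)"
    using assms unfolding locally_finite_valued_def by blast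
  have "(\<lambda>x. f (x, h)) ` {x\<in>A. (x, h) \<in> U} \<subseteq> f ` U" by auto
  then show "\<exists>U. openin (top_of_set A) U \<and> x \<in> U \<and> finite ((\<lambda>x. f (x, h)) ` U)"
    using slice_open[OF U(1) assms(2)] U x finite_subset by blast
qed

lemma slice_lc:
  assumes "locally_constant_on (A \<times> B) U f" "h \<in> B"
  shows "locally_constant_on A {x\<in>A. (x, h) \<in> U} (\<lambda>x. f (x, h))"
  unfolding locally_constant_on_def
proof
  fix x assume x: "x \<in> {x\<in>A. (x, h) \<in> U}"
  then obtain V where V: "openin (top_of_set (A \<times> B)) V" "(x,h) \<in> V" "V \<subseteq> U" "\<forall>y\<in>V. f y = f (x,h)"
    using assms unfolding locally_constant_on_def by blast
  show "\<exists>V. openin (top_of_set A) V \<and> x \<in> V \<and> V \<subseteq> {x\<in>A. (x, h) \<in> U} \<and> (\<forall>y\<in>V. f (y, h) = f (x, h))"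
  proof (intro exI[of _ "{x\<in>A. (x, h) \<in> V}"] conjI)
    show "openin (top_of_set A) {x\<in>A. (x, h) \<in> V}" by (rule slice_open[OF V(1) assms(2)])
    show "x \<in> {x\<in>A. (x, h) \<in> V}" using V(2) x by simp
    show "{x\<in>A. (x, h) \<in> V} \<subseteq> {x\<in>A. (x, h) \<in> U}" using V(3) by blast
    show "\<forall>y\<in>{x\<in>A. (x, h) \<in> V}. f (y, h) = f (x, h)" using V(4) by simp
  qed
qed

lemma slice_lul:
  fixes F :: "nat \<Rightarrow> 'x::topological_space \<times> 'y::topological_space \<Rightarrow> 'c::topological_ab_group_add"
  assumes "locally_uniform_limit (A \<times> B) F f" "h \<in> B"
  shows "locally_uniform_limit A (\<lambda>n x. F n (x, h)) (\<lambda>x. f (x, h))"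
  unfolding locally_uniform_limit_def unif_conv_on_def
proof (intro allI impI)
  fix K and V :: "'c set" assume K: "compact K \<and> K \<subseteq> A" and V: "open V \<and> 0 \<in> V"
  have "compact (K \<times> {h})" using K by (simp add: compact_Times)
  moreover have "K \<times> {h} \<subseteq> A \<times> B" using K assms(2) by auto
  ultimately have "\<forall>\<^sub>F n in sequentially. \<forall>x\<in>K \<times> {h}. F n x - f x \<in> V"
    using assms(1) V unfolding locally_uniform_limit_def unif_conv_on_def by blast
  then show "\<forall>\<^sub>F n in sequentially. \<forall>x\<in>K. F n (x, h) - f (x, h) \<in> V"
    by (rule eventually_mono) auto
qed

lemma slice_typeI:
  assumes "locally_finite_valued (A \<times> B) F" "openin (top_of_set (A \<times> B)) U"
    "locally_constant_on (A \<times> B) U F" "h \<in> B"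
    "A - {x\<in>A. (x, h) \<in> U} \<in> null_sets \<nu>"
  shows "typeI A \<nu> (\<lambda>x. F (x, h))"
  unfolding typeI_def
  by (intro conjI slice_lfv[OF assms(1,4)] exI[of _ "{x\<in>A. (x, h) \<in> U}"]
    slice_open[OF assms(2,4)] slice_lc[OF assms(3,4)] assms(5))

lemma semialg_preimage:
  assumes "S \<in> semialgebraic" "polynomial_function g"
  shows "g -` S \<in> semialgebraic"
  using assms(1)
proof induction
  case (zero p)
  have "g -` {x. p x = 0} = {x. (p \<circ> g) x = 0}" by auto
  moreover have "real_polynomial_function (p \<circ> g)"
    by (rule real_polynomial_function_compose[OF assms(2) zero.hyps])
  ultimately show ?case by (metis semialgebraic.zero)
next
  case (pos p)
  have "g -` {x. p x > 0} = {x. (p \<circ> g) x > 0}" by auto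
  moreover have "real_polynomial_function (p \<circ> g)"
    by (rule real_polynomial_function_compose[OF assms(2) pos.hyps])
  ultimately show ?case by (metis semialgebraic.pos)
next
  case (compl S)
  then show ?case using semialgebraic.compl by (metis vimage_Compl)
next
  case (union S T)
  then show ?case using semialgebraic.union by (metis vimage_Un)
qed

lemma semialg_empty: "{} \<in> semialgebraic"
proof -
  have "{x. (\<lambda>x. 0::real) x > 0} \<in> semialgebraic"
    by (intro semialgebraic.pos real_polynomial_function.intros(2))
  then show ?thesis by simp
qed

lemma semialg_finite_Union:
  assumes "finite I" "\<And>i. i \<in> I \<Longrightarrow> S i \<in> semialgebraic"
  shows "(\<Union>i\<in>I. S i) \<in> semialgebraic"
  using assms by (induction I rule: finite_induct) (auto intro: semialg_empty semialgebraic.union)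

lemma poly_pair_left: "polynomial_function (\<lambda>x::'a::real_normed_vector. (x, h::'b::real_normed_vector))"
proof -
  have "polynomial_function (\<lambda>x::'a. (x, 0::'b))"
    by (intro polynomial_function_bounded_linear bounded_linear_Pair bounded_linear_ident bounded_linear_zero)
  then have "polynomial_function (\<lambda>x::'a. (x, 0::'b) + (0, h))"
    by (intro polynomial_function_add) auto
  then show ?thesis by simp
qed

lemma slice_typeII:
  fixes f :: "'x::real_normed_vector \<times> 'y::real_normed_vector \<Rightarrow> 'c"
  assumes "typeII (A \<times> B) f" "h \<in> B"
  shows "typeII A (\<lambda>x. f (x, h))"
  unfolding typeII_def
proof (intro conjI ballI)
  show "locally_finite_valued A (\<lambda>x. f (x, h))"
    using assms slice_lfv unfolding typeII_def by blast
  fix x assume x: "x \<in> A"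
  then obtain U where U: "openin (top_of_set (A \<times> B)) U" "(x,h) \<in> U"
    "\<forall>a. \<exists>S\<in>semialgebraic. {y\<in>U. f y = a} = S \<inter> U"
    using assms unfolding typeII_def by (meson SigmaI)
  show "\<exists>U. openin (top_of_set A) U \<and> x \<in> U \<and>
        (\<forall>a. \<exists>S\<in>semialgebraic. {y\<in>U. f (y, h) = a} = S \<inter> U)"
  proof (intro exI conjI allI)
    show "openin (top_of_set A) {x\<in>A. (x, h) \<in> U}" by (rule slice_open[OF U(1) assms(2)])
    show "x \<in> {x\<in>A. (x, h) \<in> U}" using x U by auto
    fix a
    obtain S where S: "S \<in> semialgebraic" "{y\<in>U. f y = a} = S \<inter> U" using U(3) by blast
    have "(\<lambda>x. (x, h)) -` S \<in> semialgebraic" by (rule semialg_preimage[OF S(1) poly_pair_left])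
    moreover have "{y \<in> {x\<in>A. (x, h) \<in> U}. f (y, h) = a} = (\<lambda>x. (x, h)) -` S \<inter> {x\<in>A. (x, h) \<in> U}"
      using S(2) by blast
    ultimately show "\<exists>S\<in>semialgebraic. {y \<in> {x\<in>A. (x, h) \<in> U}. f (y, h) = a} = S \<inter> {x\<in>A. (x, h) \<in> U}"
      by blast
  qed
qed

lemma slice_almost_typeII:
  fixes f :: "'x::real_normed_vector \<times> 'y::real_normed_vector \<Rightarrow> 'c::topological_ab_group_add"
  assumes "almost_typeII (A \<times> B) f" "h \<in> B"
  shows "almost_typeII A (\<lambda>x. f (x, h))"
proof -
  obtain F where F: "\<forall>n. typeII (A \<times> B) (F n)" "locally_uniform_limit (A \<times> B) F f"
    using assms(1) unfolding almost_typeII_def by blast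
  show ?thesis unfolding almost_typeII_def
    by (rule exI[of _ "\<lambda>n x. F n (x, h)"]) (use slice_typeII[OF _ assms(2)] slice_lul[OF F(2) assms(2)] F(1) in blast)
qed


(* ---- part B ---- *)


lemma transform_lfv:
  assumes "locally_finite_valued A g" "continuous_on A T" "T ` A \<subseteq> A"
  shows "locally_finite_valued A (\<lambda>x. \<phi> (g (T x)))"
  unfolding locally_finite_valued_def
proof
  fix x assume x: "x \<in> A"
  then have "T x \<in> A" using assms(3) by blast
  then obtain U where U: "openin (top_of_set A) U" "T x \<in> U" "finite (g ` U)"
    using assms(1) unfolding locally_finite_valued_def by blast
  have op: "openin (top_of_set A) (A \<inter> T -` U)"
    by (rule continuous_openin_preimage[OF assms(2) _ U(1)]) (use assms(3) in blast)
  have "(\<lambda>x. \<phi> (g (T x))) ` (A \<inter> T -` U) \<subseteq> \<phi> ` g ` U" by blast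
  then have "finite ((\<lambda>x. \<phi> (g (T x))) ` (A \<inter> T -` U))"
    using U(3) finite_subset by blast
  then show "\<exists>U. openin (top_of_set A) U \<and> x \<in> U \<and> finite ((\<lambda>x. \<phi> (g (T x))) ` U)"
    using op U(2) x by blast
qed

lemma transform_lc:
  assumes "locally_constant_on A U g" "continuous_on A T" "T ` A \<subseteq> A"
  shows "locally_constant_on A (A \<inter> T -` U) (\<lambda>x. \<phi> (g (T x)))"
  unfolding locally_constant_on_def
proof
  fix x assume x: "x \<in> A \<inter> T -` U"
  then obtain V where V: "openin (top_of_set A) V" "T x \<in> V" "V \<subseteq> U" "\<forall>y\<in>V. g y = g (T x)"
    using assms(1) unfolding locally_constant_on_def by blast
  have op: "openin (top_of_set A) (A \<inter> T -` V)"
    by (rule continuous_openin_preimage[OF assms(2) _ V(1)]) (use assms(3) in blast)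
  show "\<exists>V. openin (top_of_set A) V \<and> x \<in> V \<and> V \<subseteq> A \<inter> T -` U \<and>
            (\<forall>y\<in>V. \<phi> (g (T y)) = \<phi> (g (T x)))"
  proof (intro exI[of _ "A \<inter> T -` V"] conjI op)
    show "x \<in> A \<inter> T -` V" using x V(2) by blast
    show "A \<inter> T -` V \<subseteq> A \<inter> T -` U" using V(3) by blast
    show "\<forall>y\<in>A \<inter> T -` V. \<phi> (g (T y)) = \<phi> (g (T x))" using V(4) by simp
  qed
qed

lemma transform_typeI:
  assumes "typeI A \<nu> g" "continuous_on A T" "T ` A \<subseteq> A"
    "\<And>N. N \<in> null_sets \<nu> \<Longrightarrow> N \<subseteq> A \<Longrightarrow> A \<inter> T -` N \<in> null_sets \<nu>"
  shows "typeI A \<nu> (\<lambda>x. \<phi> (g (T x)))"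
proof -
  obtain U where U: "openin (top_of_set A) U" "A - U \<in> null_sets \<nu>" "locally_constant_on A U g"
    using assms(1) unfolding typeI_def by blast
  have op: "openin (top_of_set A) (A \<inter> T -` U)"
    by (rule continuous_openin_preimage[OF assms(2) _ U(1)]) (use assms(3) in blast)
  have "A \<inter> T -` (A - U) \<in> null_sets \<nu>" by (rule assms(4)[OF U(2)]) blast
  moreover have "A \<inter> T -` (A - U) = A - (A \<inter> T -` U)" using assms(3) by blast
  ultimately have "A - (A \<inter> T -` U) \<in> null_sets \<nu>" by simp
  then show ?thesis unfolding typeI_def
    using transform_lfv[OF _ assms(2,3)] assms(1) transform_lc[OF U(3) assms(2,3)] op
    unfolding typeI_def by blast
qed

lemma hom_diff:
  fixes \<phi> :: "'a::ab_group_add \<Rightarrow> 'b::ab_group_add"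
  assumes "\<And>a b. \<phi> (a + b) = \<phi> a + \<phi> b"
  shows "\<phi> (a - b) = \<phi> a - \<phi> b"
proof -
  have "\<phi> (a - b + b) = \<phi> (a - b) + \<phi> b" by (rule assms)
  then show ?thesis by (simp add: algebra_simps)
qed

lemma hom_zero:
  fixes \<phi> :: "'a::ab_group_add \<Rightarrow> 'b::ab_group_add"
  assumes "\<And>a b. \<phi> (a + b) = \<phi> a + \<phi> b"
  shows "\<phi> 0 = 0"
  using hom_diff[OF assms, of 0 0] by simp

lemma transform_lul:
  fixes F :: "nat \<Rightarrow> 'x::topological_space \<Rightarrow> 'c::topological_ab_group_add"
    and \<phi> :: "'c \<Rightarrow> 'd::topological_ab_group_add"
  assumes "locally_uniform_limit A F g" "continuous_on A T" "T ` A \<subseteq> A"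
    "continuous_on UNIV \<phi>" "\<And>a b. \<phi> (a + b) = \<phi> a + \<phi> b"
  shows "locally_uniform_limit A (\<lambda>n x. \<phi> (F n (T x))) (\<lambda>x. \<phi> (g (T x)))"
  unfolding locally_uniform_limit_def unif_conv_on_def
proof (intro allI impI)
  fix K and V :: "'d set" assume K: "compact K \<and> K \<subseteq> A" and V: "open V \<and> 0 \<in> V"
  have "compact (T ` K)"
    using K by (intro compact_continuous_image continuous_on_subset[OF assms(2)]) auto
  moreover have "T ` K \<subseteq> A" using K assms(3) by blast
  moreover have "open (\<phi> -` V)" using V assms(4) by (intro open_vimage) auto
  moreover have "0 \<in> \<phi> -` V" using V hom_zero[OF assms(5)] by simp
  ultimately have "\<forall>\<^sub>F n in sequentially. \<forall>y\<in>T ` K. F n y - g y \<in> \<phi> -` V"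
    using assms(1) unfolding locally_uniform_limit_def unif_conv_on_def by blast
  then show "\<forall>\<^sub>F n in sequentially. \<forall>x\<in>K. \<phi> (F n (T x)) - \<phi> (g (T x)) \<in> V"
    by (rule eventually_mono) (auto simp: hom_diff[OF assms(5), symmetric])
qed

lemma transform_almost_typeI:
  fixes g :: "'x::topological_space \<Rightarrow> 'c::topological_ab_group_add"
    and \<phi> :: "'c \<Rightarrow> 'd::topological_ab_group_add"
  assumes "almost_typeI A \<nu> g" "continuous_on A T" "T ` A \<subseteq> A"
    "\<And>N. N \<in> null_sets \<nu> \<Longrightarrow> N \<subseteq> A \<Longrightarrow> A \<inter> T -` N \<in> null_sets \<nu>"
    "continuous_on UNIV \<phi>" "\<And>a b. \<phi> (a + b) = \<phi> a + \<phi> b"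
  shows "almost_typeI A \<nu> (\<lambda>x. \<phi> (g (T x)))"
proof -
  obtain F where F: "\<forall>n. typeI A \<nu> (F n)" "locally_uniform_limit A F g"
    using assms(1) unfolding almost_typeI_def by blast
  show ?thesis unfolding almost_typeI_def
    by (rule exI[of _ "\<lambda>n x. \<phi> (F n (T x))"])
      (use transform_typeI[OF _ assms(2,3,4)] F(1) transform_lul[OF F(2) assms(2,3,5,6)] in blast)
qed

lemma transform_typeII:
  fixes g :: "'x::euclidean_space \<Rightarrow> 'c"
  assumes "typeII A g" "polynomial_function T" "T ` A \<subseteq> A"
  shows "typeII A (\<lambda>x. \<phi> (g (T x)))"
  unfolding typeII_def
proof (intro conjI ballI)
  have cT: "continuous_on A T" by (rule continuous_on_polymonial_function[OF assms(2)])
  show "locally_finite_valued A (\<lambda>x. \<phi> (g (T x)))"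
    using assms(1) transform_lfv[OF _ cT assms(3)] unfolding typeII_def by blast
  fix x assume x: "x \<in> A"
  then have Tx: "T x \<in> A" using assms(3) by blast
  obtain U1 where U1: "openin (top_of_set A) U1" "T x \<in> U1" "finite (g ` U1)"
    using assms(1) Tx unfolding typeII_def locally_finite_valued_def by blast
  obtain U2 where U2: "openin (top_of_set A) U2" "T x \<in> U2"
      "\<forall>a. \<exists>S\<in>semialgebraic. {y\<in>U2. g y = a} = S \<inter> U2"
    using assms(1) Tx unfolding typeII_def by blast
  obtain S where S: "\<And>b. S b \<in> semialgebraic" "\<And>b. {y\<in>U2. g y = b} = S b \<inter> U2"
    using U2(3) by metis
  define U where "U = A \<inter> T -` (U1 \<inter> U2)"
  have op: "openin (top_of_set A) U" unfolding U_def
    by (rule continuous_openin_preimage[OF cT _ openin_Int[OF U1(1) U2(1)]]) (use assms(3) in blast)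
  show "\<exists>U. openin (top_of_set A) U \<and> x \<in> U \<and>
        (\<forall>a. \<exists>S\<in>semialgebraic. {y\<in>U. \<phi> (g (T y)) = a} = S \<inter> U)"
  proof (intro exI[of _ U] conjI allI op)
    show "x \<in> U" using x U1(2) U2(2) unfolding U_def by blast
    fix a
    define B where "B = {b\<in>g ` U1. \<phi> b = a}"
    have fB: "finite B" using U1(3) unfolding B_def by simp
    have "(\<Union>b\<in>B. T -` S b) \<in> semialgebraic"
      by (intro semialg_finite_Union fB semialg_preimage[OF S(1) assms(2)])
    moreover have "{y\<in>U. \<phi> (g (T y)) = a} = (\<Union>b\<in>B. T -` S b) \<inter> U"
    proof (intro equalityI subsetI)
      fix y assume y: "y \<in> {y\<in>U. \<phi> (g (T y)) = a}"
      then have "T y \<in> U1" "T y \<in> U2" unfolding U_def by auto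
      then have "g (T y) \<in> B" "T y \<in> S (g (T y))" using y S(2)[of "g (T y)"] unfolding B_def by auto
      then show "y \<in> (\<Union>b\<in>B. T -` S b) \<inter> U" using y by blast
    next
      fix y assume y: "y \<in> (\<Union>b\<in>B. T -` S b) \<inter> U"
      then obtain b where b: "b \<in> B" "T y \<in> S b" by blast
      have "T y \<in> U2" using y unfolding U_def by blast
      then have "g (T y) = b" using b(2) S(2)[of b] by blast
      then show "y \<in> {y\<in>U. \<phi> (g (T y)) = a}" using y b(1) unfolding B_def by blast
    qed
    ultimately show "\<exists>S\<in>semialgebraic. {y\<in>U. \<phi> (g (T y)) = a} = S \<inter> U" by blast
  qed
qed

lemma transform_almost_typeII:
  fixes g :: "'x::euclidean_space \<Rightarrow> 'c::topological_ab_group_add"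
    and \<phi> :: "'c \<Rightarrow> 'd::topological_ab_group_add"
  assumes "almost_typeII A g" "polynomial_function T" "T ` A \<subseteq> A"
    "continuous_on UNIV \<phi>" "\<And>a b. \<phi> (a + b) = \<phi> a + \<phi> b"
  shows "almost_typeII A (\<lambda>x. \<phi> (g (T x)))"
proof -
  have cT: "continuous_on A T" by (rule continuous_on_polymonial_function[OF assms(2)])
  obtain F where F: "\<forall>n. typeII A (F n)" "locally_uniform_limit A F g"
    using assms(1) unfolding almost_typeII_def by blast
  show ?thesis unfolding almost_typeII_def
    by (rule exI[of _ "\<lambda>n x. \<phi> (F n (T x))"])
      (use transform_typeII[OF _ assms(2,3)] F(1) transform_lul[OF F(2) cT assms(3,4,5)] in blast)
qed


(* ---- part C ---- *)


definition TV :: "('g \<Rightarrow> 'g \<Rightarrow> 'g) \<Rightarrow> 'g \<Rightarrow> 'g ^ 'n::finite \<Rightarrow> 'g ^ 'n" where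
  "TV mul k x = (\<chi> i. mul k (x $ i))"

context
  fixes G :: "'g::topological_space set" and mul iv e
  assumes grp: "lcsc_group G mul iv e"
begin

lemma g_mul: "x \<in> G \<Longrightarrow> y \<in> G \<Longrightarrow> mul x y \<in> G"
  and g_iv: "x \<in> G \<Longrightarrow> iv x \<in> G"
  and g_e: "e \<in> G"
  and g_assoc: "x \<in> G \<Longrightarrow> y \<in> G \<Longrightarrow> z \<in> G \<Longrightarrow> mul (mul x y) z = mul x (mul y z)"
  and g_lid: "x \<in> G \<Longrightarrow> mul e x = x"
  and g_rid: "x \<in> G \<Longrightarrow> mul x e = x"
  and g_linv: "x \<in> G \<Longrightarrow> mul (iv x) x = e"
  and g_rinv: "x \<in> G \<Longrightarrow> mul x (iv x) = e"
  using grp unfolding lcsc_group_def by auto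

lemma g_cancel1: "k \<in> G \<Longrightarrow> x \<in> G \<Longrightarrow> mul k (mul (iv k) x) = x"
  by (metis g_assoc g_iv g_lid g_rinv)

lemma g_cancel2: "k \<in> G \<Longrightarrow> x \<in> G \<Longrightarrow> mul (iv k) (mul k x) = x"
  by (metis g_assoc g_iv g_lid g_linv)

lemma g_cont_mul: "continuous_on (G \<times> G) (\<lambda>(x, y). mul x y)"
  using grp unfolding lcsc_group_def by auto

lemma g_cont_left: 
  assumes "k \<in> G" shows "continuous_on G (mul k)"
proof -
  have "continuous_on G ((\<lambda>(x, y). mul x y) \<circ> (\<lambda>y. (k, y)))"
    by (rule continuous_on_compose[OF _ continuous_on_subset[OF g_cont_mul]])
      (use assms in \<open>auto intro!: continuous_intros\<close>)
  then show ?thesis by (simp add: o_def)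
qed


lemma TV_cont:
  assumes "k \<in> G" shows "continuous_on (gpow G) (TV mul k :: 'g ^ 'n::finite \<Rightarrow> _)"
  unfolding TV_def
proof (intro continuous_on_vec_lambda)
  fix i :: 'n
  have "continuous_on (gpow G) (mul k \<circ> (\<lambda>x. x $ i))"
    by (rule continuous_on_compose[OF _ continuous_on_subset[OF g_cont_left[OF assms]]])
      (auto simp: gpow_def intro!: continuous_intros)
  then show "continuous_on (gpow G) (\<lambda>x. mul k (x $ i))" by (simp add: o_def)
qed

lemma TV_maps: "k \<in> G \<Longrightarrow> TV mul k ` gpow G \<subseteq> (gpow G :: ('g ^ 'n::finite) set)"
  by (auto simp: TV_def gpow_def g_mul)

lemma TV_in: "k \<in> G \<Longrightarrow> x \<in> gpow G \<Longrightarrow> TV mul k x \<in> (gpow G :: ('g ^ 'n::finite) set)"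
  using TV_maps by blast

lemma TV_cancel: "k \<in> G \<Longrightarrow> x \<in> gpow G \<Longrightarrow> TV mul k (TV mul (iv k) x) = (x :: 'g ^ 'n::finite)"
  by (simp add: TV_def gpow_def g_cancel1 vec_eq_iff)


lemma g_iv_unique: "a \<in> G \<Longrightarrow> b \<in> G \<Longrightarrow> mul a b = e \<Longrightarrow> iv a = b"
  by (metis g_assoc g_iv g_lid g_linv g_rid)

lemma g_iv_prod: "h \<in> G \<Longrightarrow> c \<in> G \<Longrightarrow> iv (mul h (iv c)) = mul c (iv h)"
  by (rule g_iv_unique) (auto simp: g_mul g_iv g_assoc g_cancel2 g_rinv)

lemma g_cont_iv: "continuous_on G iv"
  using grp unfolding lcsc_group_def by auto

lemma g_cont_right:
  assumes "k \<in> G" shows "continuous_on G (\<lambda>c. mul c k)"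
proof -
  have "continuous_on G ((\<lambda>(x, y). mul x y) \<circ> (\<lambda>c. (c, k)))"
    by (rule continuous_on_compose[OF _ continuous_on_subset[OF g_cont_mul]])
      (use assms in \<open>auto intro!: continuous_intros\<close>)
  then show ?thesis by (simp add: o_def)
qed
end


(* ---- part D ---- *)


context
  fixes G :: "'g::topological_space set" and mul iv e and M :: "'g measure"
  assumes grp: "lcsc_group G mul iv e" and haar: "left_haar G mul M"
begin

lemma M_space: "space M = G" and M_sets: "sets M = sets (restrict_space borel G)"
  and M_inv: "\<And>g S. g \<in> G \<Longrightarrow> S \<in> sets M \<Longrightarrow> emeasure M (mul g ` S) = emeasure M S"
  and M_fin: "\<And>K. compact K \<Longrightarrow> K \<subseteq> G \<Longrightarrow> emeasure M K < \<infinity>"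
  and M_pos: "\<And>U. openin (top_of_set G) U \<Longrightarrow> U \<noteq> {} \<Longrightarrow> emeasure M U > 0"
  using haar unfolding left_haar_def by auto

lemma openin_sets: "openin (top_of_set G) V \<Longrightarrow> V \<in> sets M"
  unfolding openin_open M_sets sets_restrict_space by auto

lemma closedin_sets: "closedin (top_of_set G) V \<Longrightarrow> V \<in> sets M"
  unfolding closedin_closed M_sets sets_restrict_space by auto

lemma M_sigma_finite: "sigma_finite_measure M"
proof
  have sc: "second_countable (top_of_set G)" and lc: "locally_compact_space (top_of_set G)"
    and hs: "Hausdorff_space (top_of_set G)"
    using grp unfolding lcsc_group_def by auto
  obtain B where B: "countable B" "\<forall>V\<in>B. openin (top_of_set G) V"
      "\<forall>U x. openin (top_of_set G) U \<and> x \<in> U \<longrightarrow> (\<exists>V\<in>B. x \<in> V \<and> V \<subseteq> U)"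
    using sc unfolding second_countable_def by blast
  define A where "A = {V\<in>B. \<exists>K. compactin (top_of_set G) K \<and> V \<subseteq> K}"
  show "\<exists>A::'g set set. countable A \<and> A \<subseteq> sets M \<and> \<Union>A = space M \<and> (\<forall>a\<in>A. emeasure M a \<noteq> \<infinity>)"
  proof (intro exI[of _ A] conjI)
    show "countable A" using B(1) unfolding A_def by simp
    show "A \<subseteq> sets M" using B(2) openin_sets unfolding A_def by blast
    show "\<Union>A = space M"
    proof
      show "\<Union>A \<subseteq> space M" using B(2) openin_imp_subset unfolding A_def M_space by blast
      show "space M \<subseteq> \<Union>A"
      proof
        fix x assume "x \<in> space M"
        then have x: "x \<in> topspace (top_of_set G)" by (simp add: M_space)
        then obtain U K where UK: "openin (top_of_set G) U" "compactin (top_of_set G) K" "x \<in> U" "U \<subseteq> K"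
          using lc unfolding locally_compact_space_def by blast
        then obtain V where "V \<in> B" "x \<in> V" "V \<subseteq> U" using B(3) by blast
        then show "x \<in> \<Union>A" using UK unfolding A_def by blast
      qed
    qed
    show "\<forall>a\<in>A. emeasure M a \<noteq> \<infinity>"
    proof
      fix a assume "a \<in> A"
      then obtain K where K: "compactin (top_of_set G) K" "a \<subseteq> K" "a \<in> B" unfolding A_def by blast
      have "closedin (top_of_set G) K" by (rule compactin_imp_closedin[OF hs K(1)])
      then have "K \<in> sets M" by (rule closedin_sets)
      moreover have "compact K" "K \<subseteq> G" using K(1) by (auto simp: compactin_subtopology)
      ultimately have "emeasure M a \<le> emeasure M K" "emeasure M K < \<infinity>"
        using K(2) M_fin by (auto intro: emeasure_mono)
      then show "emeasure M a \<noteq> \<infinity>" by (simp add: top.not_eq_extremum)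
    qed
  qed
qed

lemma mul_measurable: "k \<in> G \<Longrightarrow> mul k \<in> measurable M M"
proof -
  assume k: "k \<in> G"
  have "mul k \<in> measurable (restrict_space borel G) (restrict_space borel G)"
    by (intro measurable_restrict_space2 borel_measurable_continuous_on_restrict g_cont_left[OF grp k])
      (use g_mul[OF grp k] in \<open>auto simp: space_restrict_space\<close>)
  then show ?thesis using measurable_cong_sets[OF M_sets M_sets] by simp
qed

lemma distr_mul: "k \<in> G \<Longrightarrow> distr M M (mul k) = M"
proof (rule measure_eqI)
  assume k: "k \<in> G"
  show "sets (distr M M (mul k)) = sets M" by simp
  fix A assume A: "A \<in> sets (distr M M (mul k))"
  then have A': "A \<in> sets M" by simp
  have sub: "A \<subseteq> G" using sets.sets_into_space[OF A'] by (simp add: M_space)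
  have "mul k -` A \<inter> space M = mul (iv k) ` A"
  proof
    show "mul k -` A \<inter> space M \<subseteq> mul (iv k) ` A"
      using g_cancel2[OF grp k] g_mul[OF grp k] by (auto simp: M_space image_iff) (metis)
    show "mul (iv k) ` A \<subseteq> mul k -` A \<inter> space M"
      using g_cancel1[OF grp k] g_mul[OF grp g_iv[OF grp k]] sub by (auto simp: M_space)
  qed
  then show "emeasure (distr M M (mul k)) A = emeasure M A"
    using emeasure_distr[OF mul_measurable[OF k] A'] M_inv[OF g_iv[OF grp k] A'] by simp
qed


lemma vec_space: "space (vec_measure M :: ('g ^ 'n::finite) measure) = gpow G"
proof -
  have "vec_lambda ` (\<Pi>\<^sub>E i\<in>(UNIV::'n set). G) = gpow G"
  proof
    show "vec_lambda ` (\<Pi>\<^sub>E i\<in>(UNIV::'n set). G) \<subseteq> gpow G" by (auto simp: gpow_def)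
    show "gpow G \<subseteq> vec_lambda ` (\<Pi>\<^sub>E i\<in>(UNIV::'n set). G)"
    proof
      fix y :: "'g ^ 'n" assume "y \<in> gpow G"
      then have "vec_nth y \<in> (\<Pi>\<^sub>E i\<in>(UNIV::'n set). G)" by (auto simp: gpow_def)
      moreover have "y = vec_lambda (vec_nth y)" by simp
      ultimately show "y \<in> vec_lambda ` (\<Pi>\<^sub>E i\<in>(UNIV::'n set). G)" by blast
    qed
  qed
  then show ?thesis unfolding vec_measure_def space_embed_measure space_PiM M_space .
qed

lemma inj_vec_lambda: "inj vec_lambda"
  by (auto intro!: inj_onI simp: vec_lambda_inject)

lemma prod_sf: "product_sigma_finite (\<lambda>_::'n. M)"
  unfolding product_sigma_finite_def using M_sigma_finite by simp

lemma vec_sigma_finite: "sigma_finite_measure (vec_measure M :: ('g ^ 'n::finite) measure)"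
  unfolding vec_measure_def
  by (rule sigma_finite_embed_measure[OF product_sigma_finite.sigma_finite[OF prod_sf] inj_vec_lambda]) simp

lemma Q_measurable: 
  assumes k: "k \<in> G"
  shows "(\<lambda>x. \<lambda>i. mul k (x i)) \<in> measurable (PiM (UNIV::'n::finite set) (\<lambda>_. M)) (PiM UNIV (\<lambda>_. M))"
proof -
  have "(\<lambda>x. \<lambda>i\<in>UNIV. mul k (x i)) \<in> measurable (PiM (UNIV::'n set) (\<lambda>_. M)) (PiM UNIV (\<lambda>_. M))"
  proof (intro measurable_restrict)
    fix i :: 'n
    show "(\<lambda>x. mul k (x i)) \<in> measurable (PiM (UNIV::'n set) (\<lambda>_. M)) M"
      using measurable_compose[OF measurable_component_singleton[of i UNIV "\<lambda>_. M"] mul_measurable[OF k]] by simp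
  qed
  then show ?thesis by (simp add: restrict_def)
qed

lemma distr_Q:
  assumes k: "k \<in> G"
  shows "distr (PiM (UNIV::'n::finite set) (\<lambda>_. M)) (PiM UNIV (\<lambda>_. M)) (\<lambda>x. \<lambda>i. mul k (x i))
         = PiM UNIV (\<lambda>_. M)"
proof (rule product_sigma_finite.PiM_eqI[OF prod_sf])
  show "finite (UNIV :: 'n set)" by simp
  show "sets (distr (PiM (UNIV::'n::finite set) (\<lambda>_. M)) (PiM UNIV (\<lambda>_. M)) (\<lambda>x. \<lambda>i. mul k (x i)))
     = sets (PiM UNIV (\<lambda>_. M))" by simp
  fix A :: "'n \<Rightarrow> 'g set" assume A: "\<And>i. i \<in> UNIV \<Longrightarrow> A i \<in> sets M"
  have box: "(\<Pi>\<^sub>E i\<in>UNIV. A i) \<in> sets (PiM (UNIV::'n set) (\<lambda>_. M))"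
    using A by (intro sets_PiM_I_finite) auto
  have A2: "\<And>i. mul k -` A i \<inter> space M \<in> sets M"
    using A measurable_sets[OF mul_measurable[OF k]] by blast
  have eq: "(\<lambda>x. \<lambda>i. mul k (x i)) -` (\<Pi>\<^sub>E i\<in>UNIV. A i) \<inter> space (PiM (UNIV::'n set) (\<lambda>_. M))
      = (\<Pi>\<^sub>E i\<in>UNIV. mul k -` A i \<inter> space M)"
    by (auto simp: space_PiM PiE_def Pi_def)
  have "emeasure (distr (PiM (UNIV::'n::finite set) (\<lambda>_. M)) (PiM UNIV (\<lambda>_. M)) (\<lambda>x. \<lambda>i. mul k (x i)))
          (\<Pi>\<^sub>E i\<in>UNIV. A i)
      = emeasure (PiM (UNIV::'n set) (\<lambda>_. M)) (\<Pi>\<^sub>E i\<in>UNIV. mul k -` A i \<inter> space M)"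
    using emeasure_distr[OF Q_measurable[OF k] box] eq by simp
  also have "\<dots> = (\<Prod>i\<in>UNIV. emeasure M (mul k -` A i \<inter> space M))"
    by (rule product_sigma_finite.emeasure_PiM[OF prod_sf]) (use A2 in auto)
  also have "\<dots> = (\<Prod>i\<in>UNIV. emeasure M (A i))"
  proof (rule prod.cong[OF refl])
    fix i
    have "emeasure M (mul k -` A i \<inter> space M) = emeasure (distr M M (mul k)) (A i)"
      using emeasure_distr[OF mul_measurable[OF k] A] by simp
    then show "emeasure M (mul k -` A i \<inter> space M) = emeasure M (A i)"
      using distr_mul[OF k] by simp
  qed
  finally show "emeasure (distr (PiM (UNIV::'n::finite set) (\<lambda>_. M)) (PiM UNIV (\<lambda>_. M)) (\<lambda>x. \<lambda>i. mul k (x i)))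
          (\<Pi>\<^sub>E i\<in>UNIV. A i) = (\<Prod>i\<in>UNIV. emeasure M (A i))" .
qed

lemma TV_measurable:
  assumes k: "k \<in> G"
  shows "TV mul k \<in> measurable (vec_measure M :: ('g ^ 'n::finite) measure) (vec_measure M)"
  unfolding vec_measure_def
proof (rule measurable_embed_measure1)
  have "(\<lambda>x. vec_lambda ((\<lambda>x. \<lambda>i. mul k (x i)) x)) \<in> measurable (PiM (UNIV::'n set) (\<lambda>_. M)) (embed_measure (PiM UNIV (\<lambda>_. M)) vec_lambda)"
    by (rule measurable_compose[OF Q_measurable[OF k] measurable_embed_measure2[OF inj_vec_lambda]])
  note m = this
  have eq: "(\<lambda>x. TV mul k (vec_lambda x)) = (\<lambda>x. vec_lambda ((\<lambda>x. \<lambda>i. mul k (x i)) x))"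
    by (auto simp: TV_def)
  show "(\<lambda>x. TV mul k (vec_lambda x)) \<in> measurable (PiM (UNIV::'n set) (\<lambda>_. M)) (embed_measure (PiM UNIV (\<lambda>_. M)) vec_lambda)"
    unfolding eq by (rule m)
qed

lemma distr_TV:
  assumes k: "k \<in> G"
  shows "distr (vec_measure M) (vec_measure M) (TV mul k) = (vec_measure M :: ('g ^ 'n::finite) measure)"
proof -
  let ?P = "PiM (UNIV::'n set) (\<lambda>_. M)"
  let ?V = "vec_measure M :: ('g ^ 'n) measure"
  let ?Q = "\<lambda>x. \<lambda>i. mul k (x i)"
  have V: "?V = distr ?P ?V vec_lambda"
    unfolding vec_measure_def by (rule embed_measure_eq_distr[OF inj_vec_lambda])
  have vl: "vec_lambda \<in> measurable ?P ?V"
    unfolding vec_measure_def by (rule measurable_embed_measure2[OF inj_vec_lambda])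
  have "distr ?V ?V (TV mul k) = distr (distr ?P ?V vec_lambda) ?V (TV mul k)"
    using V by (rule arg_cong[where f="\<lambda>X. distr X ?V (TV mul k)"])
  also have "\<dots> = distr ?P ?V (TV mul k \<circ> vec_lambda)"
    by (rule distr_distr[OF TV_measurable[OF k] vl])
  also have "TV mul k \<circ> vec_lambda = vec_lambda \<circ> ?Q"
    by (auto simp: TV_def)
  also have "distr ?P ?V (vec_lambda \<circ> ?Q) = distr (distr ?P ?P ?Q) ?V vec_lambda"
    by (rule distr_distr[OF vl Q_measurable[OF k], symmetric])
  also have "\<dots> = distr ?P ?V vec_lambda" by (simp add: distr_Q[OF k])
  also have "\<dots> = ?V" using V by simp
  finally show ?thesis .
qed

lemma TV_null:
  assumes k: "k \<in> G" and N: "N \<in> null_sets (vec_measure M :: ('g ^ 'n::finite) measure)"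
  shows "gpow G \<inter> TV mul k -` N \<in> null_sets (vec_measure M :: ('g ^ 'n::finite) measure)"
proof -
  let ?V = "vec_measure M :: ('g ^ 'n) measure"
  have Ns: "N \<in> sets ?V" using N by auto
  have eq: "gpow G \<inter> TV mul k -` N = TV mul k -` N \<inter> space ?V" using vec_space by auto
  have "TV mul k -` N \<inter> space ?V \<in> sets ?V" by (rule measurable_sets[OF TV_measurable[OF k] Ns])
  moreover have "emeasure ?V (TV mul k -` N \<inter> space ?V) = 0"
  proof -
    have "emeasure ?V (TV mul k -` N \<inter> space ?V) = emeasure (distr ?V ?V (TV mul k)) N"
      using emeasure_distr[OF TV_measurable[OF k] Ns] by simp
    also have "\<dots> = emeasure ?V N" by (rule arg_cong[where f="\<lambda>X. emeasure X N", OF distr_TV[OF k]])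
    also have "\<dots> = 0" using N by auto
    finally show ?thesis .
  qed
  ultimately show ?thesis unfolding eq by auto
qed

lemma AE_slice:
  assumes N: "N \<in> null_sets ((vec_measure M :: ('g ^ 'n::finite) measure) \<Otimes>\<^sub>M M)"
  shows "AE h in M. {x\<in>gpow G. (x, h) \<in> N} \<in> null_sets (vec_measure M :: ('g ^ 'n::finite) measure)"
proof -
  let ?V = "vec_measure M :: ('g ^ 'n) measure"
  interpret pair_sigma_finite ?V M
    unfolding pair_sigma_finite_def using vec_sigma_finite M_sigma_finite by simp
  have "AE z in ?V \<Otimes>\<^sub>M M. z \<notin> N" by (rule AE_not_in[OF N])
  then have "AE x in ?V. AE y in M. (x, y) \<notin> N" by (rule AE_pair)
  moreover have "{x\<in>space (?V \<Otimes>\<^sub>M M). (fst x, snd x) \<notin> N} \<in> sets (?V \<Otimes>\<^sub>M M)"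
  proof -
    have "{x\<in>space (?V \<Otimes>\<^sub>M M). (fst x, snd x) \<notin> N} = space (?V \<Otimes>\<^sub>M M) - N" by auto
    then show ?thesis using N by auto
  qed
  ultimately have "AE y in M. AE x in ?V. (x, y) \<notin> N"
    using AE_commute[of "\<lambda>x y. (x, y) \<notin> N"] by simp
  then show ?thesis
  proof (rule eventually_mono)
    fix y assume ae: "AE x in ?V. (x, y) \<notin> N"
    have S: "(\<lambda>x. (x, y)) -` N \<inter> space ?V \<in> sets ?V"
      using sets_Pair2[of N ?V M y] N by auto
    have eq: "{x\<in>gpow G. (x, y) \<in> N} = (\<lambda>x. (x, y)) -` N \<inter> space ?V" using vec_space by auto
    have "emeasure ?V ((\<lambda>x. (x, y)) -` N \<inter> space ?V) = 0"
      using ae AE_iff_measurable[OF S, of "\<lambda>x. (x, y) \<notin> N"] by auto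
    then show "{x\<in>gpow G. (x, y) \<in> N} \<in> null_sets ?V" using S unfolding eq by auto
  qed
qed
end


(* ---- part E ---- *)


lemma lul_cong:
  fixes F :: "nat \<Rightarrow> 'x::topological_space \<Rightarrow> 'b::topological_ab_group_add"
  assumes "locally_uniform_limit A F f" "\<And>x. x \<in> A \<Longrightarrow> f x = g x"
  shows "locally_uniform_limit A F g"
  unfolding locally_uniform_limit_def unif_conv_on_def
proof (intro allI impI)
  fix K and V :: "'b set" assume K: "compact K \<and> K \<subseteq> A" and V: "open V \<and> 0 \<in> V"
  have "\<forall>\<^sub>F n in sequentially. \<forall>x\<in>K. F n x - f x \<in> V"
    using assms(1) K V unfolding locally_uniform_limit_def unif_conv_on_def by blast
  then show "\<forall>\<^sub>F n in sequentially. \<forall>x\<in>K. F n x - g x \<in> V"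
  proof (rule eventually_mono)
    fix n assume n: "\<forall>x\<in>K. F n x - f x \<in> V"
    show "\<forall>x\<in>K. F n x - g x \<in> V"
    proof
      fix x assume x: "x \<in> K"
      then have "f x = g x" using K assms(2) by blast
      then show "F n x - g x \<in> V" using n x by metis
    qed
  qed
qed

lemma almost_typeI_cong:
  assumes "almost_typeI A \<nu> f" "\<And>x. x \<in> A \<Longrightarrow> f x = g x"
  shows "almost_typeI A \<nu> g"
proof -
  obtain F where F: "\<forall>n. typeI A \<nu> (F n)" "locally_uniform_limit A F f"
    using assms(1) unfolding almost_typeI_def by blast
  show ?thesis unfolding almost_typeI_def
    by (rule exI[of _ F]) (use F(1) lul_cong[OF F(2) assms(2)] in simp)
qed

lemma almost_typeII_cong:
  assumes "almost_typeII A f" "\<And>x. x \<in> A \<Longrightarrow> f x = g x"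
  shows "almost_typeII A g"
proof -
  obtain F where F: "\<forall>n. typeII A (F n)" "locally_uniform_limit A F f"
    using assms(1) unfolding almost_typeII_def by blast
  show ?thesis unfolding almost_typeII_def
    by (rule exI[of _ F]) (use F(1) lul_cong[OF F(2) assms(2)] in simp)
qed

context
  fixes G :: "'g::topological_space set" and mul iv e and M :: "'g measure"
    and act :: "'g \<Rightarrow> 'a::{polish_space, topological_ab_group_add} \<Rightarrow> 'a"
  assumes grp: "lcsc_group G mul iv e" and haar: "left_haar G mul M"
    and modl: "polish_G_module G mul e act"
begin

lemmas gm = g_mul[OF grp] and giv = g_iv[OF grp] and ge = g_e[OF grp]

lemma act_add: "k \<in> G \<Longrightarrow> act k (a + b) = act k a + act k b"
  using modl unfolding polish_G_module_def by auto

lemma act_joint: "continuous_on (G \<times> UNIV) (\<lambda>(g, a). act g a)"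
  using modl unfolding polish_G_module_def by auto

lemma act_cont: 
  assumes "k \<in> G" shows "continuous_on UNIV (act k)"
proof -
  have "continuous_on UNIV ((\<lambda>(g, a). act g a) \<circ> (\<lambda>a. (k, a)))"
    by (rule continuous_on_compose[OF _ continuous_on_subset[OF act_joint]])
      (use assms in \<open>auto intro!: continuous_intros\<close>)
  then show ?thesis by (simp add: o_def)
qed

lemma exists_good:
  assumes "AE h in M. P h" "openin (top_of_set G) W" "W \<noteq> {}"
  shows "\<exists>h\<in>W. P h"
proof (rule ccontr)
  assume nW: "\<not> (\<exists>h\<in>W. P h)"
  have ae: "AE h in M. h \<notin> W" using assms(1)
  proof (rule eventually_mono)
    fix h assume "P h" then show "h \<notin> W" using nW by blast
  qed
  have Ws: "W \<in> sets M" by (rule openin_sets[OF grp haar assms(2)])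
  have eqs: "{x\<in>space M. \<not> x \<notin> W} = W"
    using openin_imp_subset[OF assms(2)] M_space[OF grp haar] by auto
  have "emeasure M W = 0" using AE_iff_measurable[OF Ws eqs] ae by simp
  then show False using M_pos[OF grp haar assms(2,3)] by simp
qed

lemma AE_slices_typeI:
  fixes F :: "nat \<Rightarrow> ('g ^ 'n::finite) \<times> 'g \<Rightarrow> 'a"
  assumes "\<forall>n. typeI (gpow G \<times> G) (vec_measure M \<Otimes>\<^sub>M M) (F n)"
  shows "AE h in M. h \<in> G \<and> (\<forall>n. typeI (gpow G) (vec_measure M) (\<lambda>x. F n (x, h)))"
proof -
  let ?X = "gpow G \<times> G :: (('g ^ 'n) \<times> 'g) set"
  have U1: "\<And>n. locally_finite_valued ?X (F n)" using assms unfolding typeI_def by blast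
  have ex: "\<forall>n. \<exists>U. openin (top_of_set ?X) U \<and>
      ?X - U \<in> null_sets (vec_measure M \<Otimes>\<^sub>M M) \<and> locally_constant_on ?X U (F n)"
    using assms unfolding typeI_def by blast
  obtain U where UU: "\<forall>n. openin (top_of_set ?X) (U n) \<and>
      ?X - U n \<in> null_sets (vec_measure M \<Otimes>\<^sub>M M) \<and> locally_constant_on ?X (U n) (F n)"
    using choice[OF ex] by blast
  have U: "\<And>n. locally_finite_valued ?X (F n)" "\<And>n. openin (top_of_set ?X) (U n)"
     "\<And>n. ?X - U n \<in> null_sets (vec_measure M \<Otimes>\<^sub>M M)" "\<And>n. locally_constant_on ?X (U n) (F n)"
    using U1 UU by auto
  have "\<And>n. AE h in M. {x\<in>gpow G. (x, h) \<in> ?X - U n} \<in> null_sets (vec_measure M)"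
    by (rule AE_slice[OF grp haar U(3)])
  then have "AE h in M. \<forall>n. {x\<in>gpow G. (x, h) \<in> ?X - U n} \<in> null_sets (vec_measure M)"
    by (simp add: AE_all_countable)
  then have "AE h in M. h \<in> space M \<and> (\<forall>n. {x\<in>gpow G. (x, h) \<in> ?X - U n} \<in> null_sets (vec_measure M))"
    using AE_space by (rule_tac AE_conjI) auto
  then show ?thesis
  proof (rule eventually_mono, intro conjI allI)
    fix h assume h: "h \<in> space M \<and> (\<forall>n. {x\<in>gpow G. (x, h) \<in> ?X - U n} \<in> null_sets (vec_measure M))"
    then show hG: "h \<in> G" using M_space[OF grp haar] by simp
    fix n
    have eq: "{x\<in>gpow G. (x, h) \<in> ?X - U n} = gpow G - {x\<in>gpow G. (x, h) \<in> U n}" using hG by auto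
    have "{x\<in>gpow G. (x, h) \<in> ?X - U n} \<in> null_sets (vec_measure M)" using h by blast
    then have "gpow G - {x\<in>gpow G. (x, h) \<in> U n} \<in> null_sets (vec_measure M)" unfolding eq .
    then show "typeI (gpow G) (vec_measure M) (\<lambda>x. F n (x, h))"
      by (rule slice_typeI[OF U(1) U(2) U(4) hG])
  qed
qed

lemma part1_AE:
  fixes f :: "('g ^ 'n::finite) \<times> 'g \<Rightarrow> 'a"
  assumes "almost_typeI (gpow G \<times> G) (vec_measure M \<Otimes>\<^sub>M M) f"
  shows "AE h in M. almost_typeI (gpow G) (vec_measure M) (\<lambda>x. f (x, h))"
proof -
  obtain F where F: "\<forall>n. typeI (gpow G \<times> G) (vec_measure M \<Otimes>\<^sub>M M) (F n)"
      "locally_uniform_limit (gpow G \<times> G) F f"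
    using assms unfolding almost_typeI_def by blast
  show ?thesis using AE_slices_typeI[OF F(1)]
  proof (rule eventually_mono)
    fix h assume h: "h \<in> G \<and> (\<forall>n. typeI (gpow G) (vec_measure M) (\<lambda>x. F n (x, h)))"
    show "almost_typeI (gpow G) (vec_measure M) (\<lambda>x. f (x, h))"
      unfolding almost_typeI_def
      by (rule exI[of _ "\<lambda>n x. F n (x, h)"]) (use h slice_lul[OF F(2)] in blast)
  qed
qed

lemma equiv_rel:
  fixes f :: "('g ^ 'n::finite) \<times> 'g \<Rightarrow> 'a"
  assumes eq: "equivariant G mul act f" and h: "h \<in> G" and c: "c \<in> G" and x: "x \<in> gpow G"
  shows "f (x, h) = act (mul h (iv c)) (f (TV mul (iv (mul h (iv c))) x, c))"
proof -
  let ?k = "mul h (iv c)"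
  have k: "?k \<in> G" using h c gm giv by blast
  have y: "TV mul (iv ?k) x \<in> gpow G" by (rule TV_in[OF grp giv[OF k] x])
  have "f (\<chi> i. mul ?k (TV mul (iv ?k) x $ i), mul ?k c) = act ?k (f (TV mul (iv ?k) x, c))"
    using eq k y c unfolding equivariant_def by blast
  moreover have "(\<chi> i. mul ?k (TV mul (iv ?k) x $ i)) = x"
    using TV_cancel[OF grp k x] unfolding TV_def by simp
  moreover have "mul ?k c = h" using h c by (simp add: g_assoc[OF grp] giv g_linv[OF grp] g_rid[OF grp])
  ultimately show ?thesis by simp
qed

lemma part1_every:
  fixes f :: "('g ^ 'n::finite) \<times> 'g \<Rightarrow> 'a"
  assumes "almost_typeI (gpow G \<times> G) (vec_measure M \<Otimes>\<^sub>M M) f" "equivariant G mul act f" "h \<in> G"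
  shows "almost_typeI (gpow G) (vec_measure M) (\<lambda>x. f (x, h))"
proof -
  have "openin (top_of_set G) G" by simp
  then obtain c where c: "c \<in> G" "almost_typeI (gpow G) (vec_measure M) (\<lambda>x. f (x, c))"
    using exists_good[OF part1_AE[OF assms(1)]] ge by blast
  let ?k = "mul (h) (iv c)"
  have k: "?k \<in> G" using assms(3) c gm giv by blast
  have "almost_typeI (gpow G) (vec_measure M) (\<lambda>x. act ?k (f (TV mul (iv ?k) x, c)))"
    by (rule transform_almost_typeI[OF c(2) TV_cont[OF grp giv[OF k]] TV_maps[OF grp giv[OF k]]
        _ act_cont[OF k] act_add[OF k]])
      (rule TV_null[OF grp haar giv[OF k]])
  then show ?thesis
    by (rule almost_typeI_cong) (use equiv_rel[OF assms(2,3) c(1)] in simp)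
qed

end


(* ---- part F ---- *)


context
  fixes G :: "'g::topological_space set" and mul iv e and M :: "'g measure"
    and act :: "'g \<Rightarrow> 'a::{polish_space, topological_ab_group_add} \<Rightarrow> 'a"
  assumes grp: "lcsc_group G mul iv e" and haar: "left_haar G mul M"
    and modl: "polish_G_module G mul e act"
begin

lemmas gmF = g_mul[OF grp] and givF = g_iv[OF grp] and geF = g_e[OF grp]

lemma act_tube:
  assumes C1: "compact C1" "C1 \<subseteq> G" and V: "open V" "0 \<in> V"
  shows "\<exists>X0. open X0 \<and> 0 \<in> X0 \<and> (\<forall>k\<in>C1. \<forall>w\<in>X0. act k w \<in> V)"
proof -
  have "openin (top_of_set (G \<times> UNIV)) ((G \<times> UNIV) \<inter> (\<lambda>(g, a). act g a) -` V)"
    by (rule continuous_openin_preimage_gen[OF act_joint[OF grp haar modl] V(1)])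
  then obtain Op where Op: "open Op" "(G \<times> UNIV) \<inter> (\<lambda>(g, a). act g a) -` V = (G \<times> UNIV) \<inter> Op"
    unfolding openin_open by blast
  have oW: "open (prod.swap -` Op)" by (intro open_vimage Op(1) continuous_on_swap)
  have "{0::'a} \<times> C1 \<subseteq> prod.swap -` Op"
  proof
    fix z assume "z \<in> {0::'a} \<times> C1"
    then obtain k where z: "z = (0, k)" "k \<in> C1" by blast
    have "act k 0 = 0" using hom_zero[of "act k"] act_add[OF grp haar modl] C1(2) z(2) by blast
    then have "(k, 0) \<in> (G \<times> UNIV) \<inter> (\<lambda>(g, a). act g a) -` V" using C1(2) z(2) V(2) by auto
    then show "z \<in> prod.swap -` Op" using Op(2) z(1) by auto
  qed
  then obtain X0 where X0: "0 \<in> X0" "open X0" "X0 \<times> C1 \<subseteq> prod.swap -` Op"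
    using Elementary_Topology.tube_lemma[OF C1(1) oW] by blast
  have "\<forall>k\<in>C1. \<forall>w\<in>X0. act k w \<in> V"
  proof (intro ballI)
    fix k w assume k: "k \<in> C1" and w: "w \<in> X0"
    then have "(k, w) \<in> (G \<times> UNIV) \<inter> Op" using X0(3) C1(2) by auto
    then show "act k w \<in> V" using Op(2) by auto
  qed
  then show ?thesis using X0 by blast
qed

lemma Phi_cont:
  assumes h: "h \<in> G"
  shows "continuous_on (G \<times> gpow G) (\<lambda>z. (TV mul (mul (fst z) (iv h)) (snd z) :: 'g ^ 'n::finite, fst z))"
proof -
  have c1: "continuous_on (G \<times> (gpow G :: ('g ^ 'n) set)) (\<lambda>z. mul (fst z) (iv h))"
    by (rule continuous_on_compose2[OF g_cont_right[OF grp givF[OF h]] continuous_on_fst]) auto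
  have "continuous_on (G \<times> (gpow G :: ('g ^ 'n) set)) (\<lambda>z. \<chi> i. mul (mul (fst z) (iv h)) (snd z $ i))"
  proof (intro continuous_on_vec_lambda)
    fix i :: 'n
    have c2: "continuous_on (G \<times> (gpow G :: ('g ^ 'n) set)) (\<lambda>z. (mul (fst z) (iv h), snd z $ i))"
      by (intro continuous_on_Pair c1 continuous_on_component continuous_on_snd continuous_on_id)
    have "continuous_on (G \<times> (gpow G :: ('g ^ 'n) set)) (\<lambda>z. (\<lambda>(x, y). mul x y) (mul (fst z) (iv h), snd z $ i))"
      by (rule continuous_on_compose2[OF g_cont_mul[OF grp] c2])
        (auto simp: gpow_def intro!: gmF givF h)
    then show "continuous_on (G \<times> (gpow G :: ('g ^ 'n) set)) (\<lambda>z. mul (mul (fst z) (iv h)) (snd z $ i))"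
      by simp
  qed
  note cc = this
  show ?thesis unfolding TV_def by (intro continuous_on_Pair cc continuous_on_fst continuous_on_id)
qed


lemma part1_regular:
  fixes f :: "('g ^ 'n::finite) \<times> 'g \<Rightarrow> 'a"
  assumes atI: "almost_typeI (gpow G \<times> G) (vec_measure M \<Otimes>\<^sub>M M) f"
    and eqv: "equivariant G mul act f"
    and reg: "regular_typeI (gpow G \<times> G) (vec_measure M \<Otimes>\<^sub>M M) f ((\<chi> i. e), e)"
    and h: "h \<in> G"
  shows "regular_typeI (gpow G) (vec_measure M) (\<lambda>x. f (x, h)) (\<chi> i. h)"
proof -
  let ?X = "gpow G \<times> G :: (('g ^ 'n) \<times> 'g) set"
  let ?V = "vec_measure M :: ('g ^ 'n) measure"
  let ?E = "((\<chi> i. e) :: 'g ^ 'n, e)"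
  obtain F where F1: "\<forall>n. typeI ?X (?V \<Otimes>\<^sub>M M) (F n) \<and>
        (\<exists>V. openin (top_of_set ?X) V \<and> ?E \<in> V \<and> (\<forall>y\<in>V. F n y = F n ?E))"
      and F2: "locally_uniform_limit ?X F f"
    using reg unfolding regular_typeI_def by blast
  have FI: "\<forall>n. typeI ?X (?V \<Otimes>\<^sub>M M) (F n)" using F1 by blast
  have "\<forall>n. \<exists>V. openin (top_of_set ?X) V \<and> ?E \<in> V \<and> (\<forall>y\<in>V. F n y = F n ?E)" using F1 by blast
  then obtain Vs where Vs: "\<forall>n. openin (top_of_set ?X) (Vs n) \<and> ?E \<in> Vs n \<and> (\<forall>y\<in>Vs n. F n y = F n ?E)"
    using choice[OF \<open>\<forall>n. \<exists>V. openin (top_of_set ?X) V \<and> ?E \<in> V \<and> (\<forall>y\<in>V. F n y = F n ?E)\<close>] by blast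
  have good: "AE c in M. c \<in> G \<and> (\<forall>n. typeI (gpow G) ?V (\<lambda>x. F n (x, c)))"
    by (rule AE_slices_typeI[OF grp haar modl FI])
  have "e \<in> topspace (top_of_set G)" using geF by simp
  then obtain U0 C0 where U0: "openin (top_of_set G) U0" "compactin (top_of_set G) C0" "e \<in> U0" "U0 \<subseteq> C0"
    using grp unfolding lcsc_group_def locally_compact_space_def by blast
  have C0: "compact C0" "C0 \<subseteq> G" using U0(2) by (auto simp: compactin_subtopology)
  define d where "d c = ((\<chi> i. c) :: 'g ^ 'n, c)" for c
  have dcont: "continuous_on G d" unfolding d_def by (intro continuous_intros)
  have dmap: "d \<in> G \<rightarrow> ?X" unfolding d_def by (auto simp: gpow_def)
  define W where "W n = U0 \<inter> (G \<inter> d -` Vs n)" for n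
  have Wop: "openin (top_of_set G) (W n)" for n
    unfolding W_def using Vs by (intro openin_Int U0(1) continuous_openin_preimage[OF dcont dmap]) blast
  have "e \<in> W n" for n using Vs U0(3) geF unfolding W_def d_def by auto
  then have "\<forall>n. \<exists>c\<in>W n. c \<in> G \<and> (\<forall>n. typeI (gpow G) ?V (\<lambda>x. F n (x, c)))"
    using exists_good[OF grp haar modl good Wop] by blast
  then obtain hs where hs: "\<forall>n. hs n \<in> W n \<and> hs n \<in> G \<and> (\<forall>m. typeI (gpow G) ?V (\<lambda>x. F m (x, hs n)))"
    using choice[of "\<lambda>n c. c \<in> W n \<and> c \<in> G \<and> (\<forall>n. typeI (gpow G) ?V (\<lambda>x. F n (x, c)))"] by blast
  have hsG: "hs n \<in> G" and hsC: "hs n \<in> C0" and hsV: "d (hs n) \<in> Vs n"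
    and hsT: "typeI (gpow G) ?V (\<lambda>x. F n (x, hs n))" for n
    using hs U0(4) unfolding W_def by auto
  define k where "k n = mul h (iv (hs n))" for n
  have kG: "k n \<in> G" for n unfolding k_def using h hsG gmF givF by blast
  have ivk: "iv (k n) = mul (hs n) (iv h)" for n unfolding k_def by (rule g_iv_prod[OF grp h hsG])
  define T where "T n = (TV mul (iv (k n)) :: 'g ^ 'n \<Rightarrow> 'g ^ 'n)" for n
  define Gn where "Gn n x = act (k n) (F n (T n x, hs n))" for n x
  have frel: "f (x, h) = act (k n) (f (T n x, hs n))" if "x \<in> gpow G" for x n
    unfolding k_def T_def by (rule equiv_rel[OF grp haar modl eqv h hsG that])
  have Tcont: "continuous_on (gpow G) (T n)" for n unfolding T_def by (rule TV_cont[OF grp givF[OF kG]])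
  have Tmap: "T n ` gpow G \<subseteq> gpow G" for n unfolding T_def by (rule TV_maps[OF grp givF[OF kG]])
  have GnI: "typeI (gpow G) ?V (Gn n)" for n
    unfolding Gn_def
    by (rule transform_typeI[OF hsT Tcont Tmap]) (unfold T_def, rule TV_null[OF grp haar givF[OF kG]])
  have hvec: "(\<chi> i. h) \<in> (gpow G :: ('g ^ 'n) set)" using h by (auto simp: gpow_def)
  have Th: "T n (\<chi> i. h) = (\<chi> i. hs n)" for n
  proof -
    have "mul (mul (hs n) (iv h)) h = hs n"
      using g_assoc[OF grp hsG givF[OF h] h] g_linv[OF grp h] g_rid[OF grp hsG] by simp
    then show ?thesis unfolding T_def TV_def ivk by (simp only: vec_lambda_beta)
  qed
  have Gnc: "\<exists>V. openin (top_of_set (gpow G)) V \<and> (\<chi> i. h) \<in> V \<and> (\<forall>y\<in>V. Gn n y = Gn n (\<chi> i. h))" for n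
  proof (intro exI[of _ "gpow G \<inter> (\<lambda>x. (T n x, hs n)) -` Vs n"] conjI ballI)
    have cc: "continuous_on (gpow G) (\<lambda>x. (T n x, hs n))" by (intro continuous_on_Pair Tcont continuous_on_const)
    show "openin (top_of_set (gpow G)) (gpow G \<inter> (\<lambda>x. (T n x, hs n)) -` Vs n)"
    proof -
      have op: "openin (top_of_set ?X) (Vs n)" using Vs by blast
      have mp: "(\<lambda>x. (T n x, hs n)) \<in> gpow G \<rightarrow> ?X" using Tmap hsG by auto
      show ?thesis by (rule continuous_openin_preimage[OF cc mp op])
    qed
    have hin: "(T n (\<chi> i. h), hs n) \<in> Vs n" unfolding Th using hsV unfolding d_def .
    show "(\<chi> i. h) \<in> gpow G \<inter> (\<lambda>x. (T n x, hs n)) -` Vs n"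
      using hvec hin by blast
    fix y assume "y \<in> gpow G \<inter> (\<lambda>x. (T n x, hs n)) -` Vs n"
    then have "F n (T n y, hs n) = F n ?E" using Vs by blast
    moreover have "F n (T n (\<chi> i. h), hs n) = F n ?E" using Vs hin by blast
    ultimately show "Gn n y = Gn n (\<chi> i. h)" unfolding Gn_def by simp
  qed
  have lul: "locally_uniform_limit (gpow G) Gn (\<lambda>x. f (x, h))"
    unfolding locally_uniform_limit_def unif_conv_on_def
  proof (intro allI impI)
    fix K :: "('g ^ 'n) set" and V :: "'a set" assume K: "compact K \<and> K \<subseteq> gpow G" and V: "open V \<and> 0 \<in> V"
    define Phi where "Phi z = (TV mul (mul (fst z) (iv h)) (snd z) :: 'g ^ 'n, fst z)" for z
    define Q where "Q = Phi ` (C0 \<times> K)"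
    have "compact Q" unfolding Q_def Phi_def
      by (rule compact_continuous_image[OF continuous_on_subset[OF Phi_cont[OF h]] compact_Times[OF C0(1)]])
        (use K C0 in auto)
    moreover have "Q \<subseteq> ?X" unfolding Q_def Phi_def
      using K C0 by (auto intro!: TV_in[OF grp] gmF givF h)
    define C1 where "C1 = (\<lambda>c. mul h (iv c)) ` C0"
    have cC1: "continuous_on G (\<lambda>c. mul h (iv c))"
      by (rule continuous_on_compose2[OF g_cont_left[OF grp h] g_cont_iv[OF grp]]) (auto intro: givF)
    have C1: "compact C1" "C1 \<subseteq> G" unfolding C1_def
      using C0 by (auto intro!: compact_continuous_image continuous_on_subset[OF cC1] gmF h givF)
    obtain X0 where X0: "open X0" "0 \<in> X0" "\<forall>k\<in>C1. \<forall>w\<in>X0. act k w \<in> V"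
      using act_tube[OF C1] V by blast
    have "\<forall>\<^sub>F n in sequentially. \<forall>q\<in>Q. F n q - f q \<in> X0"
      using F2 \<open>compact Q\<close> \<open>Q \<subseteq> ?X\<close> X0 unfolding locally_uniform_limit_def unif_conv_on_def by blast
    then show "\<forall>\<^sub>F n in sequentially. \<forall>x\<in>K. Gn n x - f (x, h) \<in> V"
    proof (rule eventually_mono)
      fix n assume n: "\<forall>q\<in>Q. F n q - f q \<in> X0"
      show "\<forall>x\<in>K. Gn n x - f (x, h) \<in> V"
      proof
        fix x assume x: "x \<in> K"
        have xg: "x \<in> gpow G" using x K by blast
        have "(T n x, hs n) = Phi (hs n, x)" unfolding T_def Phi_def ivk fst_conv snd_conv ..
        then have q: "(T n x, hs n) \<in> Q" unfolding Q_def using hsC x by auto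
        have kC: "k n \<in> C1" unfolding C1_def k_def using hsC by blast
        have "Gn n x - f (x, h) = act (k n) (F n (T n x, hs n)) - act (k n) (f (T n x, hs n))"
          unfolding Gn_def frel[OF xg, of n] ..
        also have "\<dots> = act (k n) (F n (T n x, hs n) - f (T n x, hs n))"
          by (rule hom_diff[symmetric]) (rule act_add[OF grp haar modl kG])
        finally have eq: "Gn n x - f (x, h) = act (k n) (F n (T n x, hs n) - f (T n x, hs n))" .
        have "F n (T n x, hs n) - f (T n x, hs n) \<in> X0" using n q by blast
        then show "Gn n x - f (x, h) \<in> V" unfolding eq using X0(3) kC by blast
      qed
    qed
  qed
  have "almost_typeI (gpow G) ?V (\<lambda>x. f (x, h))"
    by (rule part1_every[OF grp haar modl atI eqv h])
  moreover have "(\<forall>n. typeI (gpow G) ?V (Gn n) \<and>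
      (\<exists>V. openin (top_of_set (gpow G)) V \<and> (\<chi> i. h) \<in> V \<and> (\<forall>y\<in>V. Gn n y = Gn n (\<chi> i. h))))
      \<and> locally_uniform_limit (gpow G) Gn (\<lambda>x. f (x, h))"
    using GnI Gnc lul by simp
  ultimately show ?thesis unfolding regular_typeI_def by blast
qed
end


(* ---- part H ---- *)


lemma TV_linear: "linear (TV (**) (k :: real^'k::finite^'k) :: (real^'k^'k)^'n::finite \<Rightarrow> _)"
proof (rule linearI)
  fix x y :: "(real^'k^'k)^'n" and c :: real
  show "TV (**) k (x + y) = TV (**) k x + TV (**) k y"
    by (simp add: TV_def vec_eq_iff matrix_add_ldistrib)
  have "k ** (c *\<^sub>R z) = c *\<^sub>R (k ** z)" for z :: "real^'k^'k"
    by (simp add: matrix_scalar_ac scalar_matrix_assoc)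
  then show "TV (**) k (c *\<^sub>R x) = c *\<^sub>R TV (**) k x"
    by (simp add: TV_def vec_eq_iff)
qed

lemma TV_poly: "polynomial_function (TV (**) (k :: real^'k::finite^'k) :: (real^'k^'k)^'n::finite \<Rightarrow> _)"
  by (rule polynomial_function_bounded_linear) (use TV_linear linear_conv_bounded_linear in blast)


lemma part2_regular:
  fixes G :: "(real ^ 'k::finite ^ 'k) set" and M :: "(real ^ 'k ^ 'k) measure"
    and act :: "real ^ 'k ^ 'k \<Rightarrow> 'a::{polish_space, topological_ab_group_add} \<Rightarrow> 'a"
    and f :: "((real ^ 'k ^ 'k) ^ 'n::finite) \<times> (real ^ 'k ^ 'k) \<Rightarrow> 'a"
  assumes grp: "lcsc_group G (**) matrix_inv (mat 1)" and haar: "left_haar G (**) M"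
    and modl: "polish_G_module G (**) (mat 1) act"
    and eqv: "equivariant G (**) act f"
    and reg: "regular_typeII (gpow G \<times> G) f ((\<chi> i. mat 1), mat 1)"
    and h: "h \<in> G"
  shows "regular_typeII (gpow G) (\<lambda>x. f (x, h)) (\<chi> i. h)"
proof -
  let ?X = "gpow G \<times> G :: (((real ^ 'k ^ 'k) ^ 'n) \<times> (real ^ 'k ^ 'k)) set"
  let ?E = "((\<chi> i. mat 1) :: (real ^ 'k ^ 'k) ^ 'n, mat 1 :: real ^ 'k ^ 'k)"
  have ge: "mat 1 \<in> G" by (rule g_e[OF grp])
  obtain F where F1: "\<forall>n. typeII ?X (F n) \<and>
        (\<exists>V. openin (top_of_set ?X) V \<and> ?E \<in> V \<and> (\<forall>y\<in>V. F n y = F n ?E))"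
      and F2: "locally_uniform_limit ?X F f"
    using reg unfolding regular_typeII_def by blast
  have ivh: "matrix_inv h \<in> G" by (rule g_iv[OF grp h])
  define T where "T = (TV (**) (matrix_inv h) :: (real ^ 'k ^ 'k) ^ 'n \<Rightarrow> _)"
  have Tpoly: "polynomial_function T" unfolding T_def by (rule TV_poly)
  have Tcont: "continuous_on (gpow G) T" unfolding T_def by (rule TV_cont[OF grp ivh])
  have Tmap: "T ` gpow G \<subseteq> gpow G" unfolding T_def by (rule TV_maps[OF grp ivh])
  have iv1: "matrix_inv (mat 1 :: real ^ 'k ^ 'k) = mat 1"
    by (rule g_iv_unique[OF grp ge ge]) (rule g_rid[OF grp ge])
  have h1: "h ** matrix_inv (mat 1) = h" unfolding iv1 by (rule g_rid[OF grp h])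
  have frel: "f (x, h) = act h (f (T x, mat 1))" if "x \<in> gpow G" for x
    using equiv_rel[OF grp haar modl eqv h ge that] unfolding h1 T_def .
  define Gn where "Gn n x = act h (F n (T x, mat 1))" for n x
  have GnII: "typeII (gpow G) (Gn n)" for n
  proof -
    have "typeII (gpow G) (\<lambda>y. F n (y, mat 1))" using slice_typeII F1 ge by blast
    then show ?thesis unfolding Gn_def by (rule transform_typeII[OF _ Tpoly Tmap])
  qed
  have Th: "T (\<chi> i. h) = (\<chi> i. mat 1)"
    unfolding T_def TV_def using g_linv[OF grp h] by (simp only: vec_lambda_beta)
  have hvec: "(\<chi> i. h) \<in> (gpow G :: ((real ^ 'k ^ 'k) ^ 'n) set)" using h by (auto simp: gpow_def)
  have Gnc: "\<exists>V. openin (top_of_set (gpow G)) V \<and> (\<chi> i. h) \<in> V \<and> (\<forall>y\<in>V. Gn n y = Gn n (\<chi> i. h))" for n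
  proof -
    obtain Vn where Vn: "openin (top_of_set ?X) Vn" "?E \<in> Vn" "\<forall>y\<in>Vn. F n y = F n ?E" using F1 by blast
    show ?thesis
    proof (intro exI[of _ "gpow G \<inter> (\<lambda>x. (T x, mat 1)) -` Vn"] conjI ballI)
      have cc: "continuous_on (gpow G) (\<lambda>x. (T x, mat 1 :: real ^ 'k ^ 'k))"
        by (intro continuous_on_Pair Tcont continuous_on_const)
      have mp: "(\<lambda>x. (T x, mat 1 :: real ^ 'k ^ 'k)) \<in> gpow G \<rightarrow> ?X" using Tmap ge by auto
      show "openin (top_of_set (gpow G)) (gpow G \<inter> (\<lambda>x. (T x, mat 1)) -` Vn)"
        by (rule continuous_openin_preimage[OF cc mp Vn(1)])
      have hin: "(T (\<chi> i. h), mat 1) \<in> Vn" unfolding Th using Vn(2) .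
      show "(\<chi> i. h) \<in> gpow G \<inter> (\<lambda>x. (T x, mat 1)) -` Vn" using hvec hin by blast
      fix y assume "y \<in> gpow G \<inter> (\<lambda>x. (T x, mat 1)) -` Vn"
      then have "F n (T y, mat 1) = F n ?E" using Vn(3) by blast
      moreover have "F n (T (\<chi> i. h), mat 1) = F n ?E" using Vn(3) hin by blast
      ultimately show "Gn n y = Gn n (\<chi> i. h)" unfolding Gn_def by simp
    qed
  qed
  have "locally_uniform_limit (gpow G) (\<lambda>n x. act h (F n (T x, mat 1))) (\<lambda>x. act h (f (T x, mat 1)))"
    by (rule transform_lul[OF slice_lul[OF F2 ge] Tcont Tmap act_cont[OF grp haar modl h]
        act_add[OF grp haar modl h]])
  then have lul: "locally_uniform_limit (gpow G) Gn (\<lambda>x. f (x, h))"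
    unfolding Gn_def by (rule lul_cong) (use frel in simp)
  have "almost_typeII (gpow G \<times> G) f"
    using reg unfolding regular_typeII_def by blast
  then have "almost_typeII (gpow G) (\<lambda>x. f (x, h))" by (rule slice_almost_typeII[OF _ h])
  moreover have "(\<forall>n. typeII (gpow G) (Gn n) \<and>
      (\<exists>V. openin (top_of_set (gpow G)) V \<and> (\<chi> i. h) \<in> V \<and> (\<forall>y\<in>V. Gn n y = Gn n (\<chi> i. h))))
      \<and> locally_uniform_limit (gpow G) Gn (\<lambda>x. f (x, h))"
    using GnII Gnc lul by simp
  ultimately show ?thesis unfolding regular_typeII_def by blast
qed

theorem lemma3p2:
  shows
  "(\<forall>(G::'g::topological_space set) mul iv e M (act::'g \<Rightarrow> 'a::{polish_space, topological_ab_group_add} \<Rightarrow> 'a)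
        (f::('g ^ 'n::finite) \<times> 'g \<Rightarrow> 'a).
      lcsc_group G mul iv e \<and> left_haar G mul M \<and> polish_G_module G mul e act \<and>
      almost_typeI (gpow G \<times> G) (vec_measure M \<Otimes>\<^sub>M M) f \<longrightarrow>
        (AE h in M. almost_typeI (gpow G) (vec_measure M) (\<lambda>x. f (x, h))) \<and>
        (equivariant G mul act f \<longrightarrow>
           (\<forall>h\<in>G. almost_typeI (gpow G) (vec_measure M) (\<lambda>x. f (x, h))) \<and>
           (regular_typeI (gpow G \<times> G) (vec_measure M \<Otimes>\<^sub>M M) f ((\<chi> i. e), e) \<longrightarrow>
              (\<forall>h\<in>G. regular_typeI (gpow G) (vec_measure M) (\<lambda>x. f (x, h)) (\<chi> i. h)))))
   \<and>
   (\<forall>(G::(real ^ 'k::finite ^ 'k) set) M (act::real ^ 'k ^ 'k \<Rightarrow> 'a \<Rightarrow> 'a)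
        (f::((real ^ 'k ^ 'k) ^ 'n) \<times> (real ^ 'k ^ 'k) \<Rightarrow> 'a).
      algebraic_subgroup G \<and> lcsc_group G (**) matrix_inv (mat 1) \<and> left_haar G (**) M \<and>
      polish_G_module G (**) (mat 1) act \<and> almost_typeII (gpow G \<times> G) f \<longrightarrow>
        (AE h in M. almost_typeII (gpow G) (\<lambda>x. f (x, h))) \<and>
        (equivariant G (**) act f \<longrightarrow>
           (\<forall>h\<in>G. almost_typeII (gpow G) (\<lambda>x. f (x, h))) \<and>
           (regular_typeII (gpow G \<times> G) f ((\<chi> i. mat 1), mat 1) \<longrightarrow>
              (\<forall>h\<in>G. regular_typeII (gpow G) (\<lambda>x. f (x, h)) (\<chi> i. h)))))"
proof (intro conjI allI impI)
  fix G :: "'g::topological_space set" and mul iv e M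
    and act :: "'g \<Rightarrow> 'a::{polish_space, topological_ab_group_add} \<Rightarrow> 'a"
    and f :: "('g ^ 'n::finite) \<times> 'g \<Rightarrow> 'a"
  assume A: "lcsc_group G mul iv e \<and> left_haar G mul M \<and> polish_G_module G mul e act \<and>
      almost_typeI (gpow G \<times> G) (vec_measure M \<Otimes>\<^sub>M M) f"
  then have grp: "lcsc_group G mul iv e" and haar: "left_haar G mul M"
    and modl: "polish_G_module G mul e act"
    and atI: "almost_typeI (gpow G \<times> G) (vec_measure M \<Otimes>\<^sub>M M) f" by auto
  show "AE h in M. almost_typeI (gpow G) (vec_measure M) (\<lambda>x. f (x, h))"
    by (rule part1_AE[OF grp haar modl atI])
  assume eqv: "equivariant G mul act f"
  show "\<forall>h\<in>G. almost_typeI (gpow G) (vec_measure M) (\<lambda>x. f (x, h))"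
    using part1_every[OF grp haar modl atI eqv] by blast
  assume reg: "regular_typeI (gpow G \<times> G) (vec_measure M \<Otimes>\<^sub>M M) f ((\<chi> i. e), e)"
  show "\<forall>h\<in>G. regular_typeI (gpow G) (vec_measure M) (\<lambda>x. f (x, h)) (\<chi> i. h)"
    using part1_regular[OF grp haar modl atI eqv reg] by blast
next
  fix G :: "(real ^ 'k::finite ^ 'k) set" and M
    and act :: "real ^ 'k ^ 'k \<Rightarrow> 'a \<Rightarrow> 'a"
    and f :: "((real ^ 'k ^ 'k) ^ 'n) \<times> (real ^ 'k ^ 'k) \<Rightarrow> 'a"
  assume A: "algebraic_subgroup G \<and> lcsc_group G (**) matrix_inv (mat 1) \<and> left_haar G (**) M \<and>
      polish_G_module G (**) (mat 1) act \<and> almost_typeII (gpow G \<times> G) f"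
  then have grp: "lcsc_group G (**) matrix_inv (mat 1)" and haar: "left_haar G (**) M"
    and modl: "polish_G_module G (**) (mat 1) act"
    and atII: "almost_typeII (gpow G \<times> G) f" by auto
  have every: "\<forall>h\<in>G. almost_typeII (gpow G) (\<lambda>x. f (x, h))"
    using slice_almost_typeII[OF atII] by blast
  show "AE h in M. almost_typeII (gpow G) (\<lambda>x. f (x, h))"
    using every M_space[OF grp haar] by (intro AE_I2) auto
  assume eqv: "equivariant G (**) act f"
  show "\<forall>h\<in>G. almost_typeII (gpow G) (\<lambda>x. f (x, h))" by (rule every)
  assume reg: "regular_typeII (gpow G \<times> G) f ((\<chi> i. mat 1), mat 1)"
  show "\<forall>h\<in>G. regular_typeII (gpow G) (\<lambda>x. f (x, h)) (\<chi> i. h)"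
    using part2_regular[OF grp haar modl eqv reg] by blast
qed


end
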